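(* Let $X$ be a regular space and $Y$ any space. Then $nw(X)\leq nw(Q_{P}(X,Y))$.
   Context: A function $f\colon X\to Y$ between topological spaces is quasi-continuous at $x\in X$ if for every open $U\ni x$ and every open $V\ni f(x)$ there is a non-empty open $G\subseteq U$ with $f(G)\subseteq V$; $f$ is quasi-continuous if it is so at every point. $Q_{P}(X,Y)$ is the set of quasi-continuous functions $X\to Y$ with the topology of point-wise convergence, whose base consists of the sets $[x_1,\dots,x_n;U_1,\dots,U_n]=\{f: f(x_i)\in U_i,\ 1\le i\le n\}$ with $x_i\in X$, $U_i$ open in $Y$. For a space $Z$, $nw(Z)=\aleph_0+\min\{|\mathcal{N}|:\mathcal{N}\text{ a network of }Z\}$, where a network is a family $\mathcal{N}$ of subsets of $Z$ such that for every $z\in Z$ and open $U\ni z$ there is $N\in\mathcal{N}$ with $z\in N\subseteq U$. *)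

theory Defs
  imports "HOL-Analysis.Analysis"
begin

definition quasi_continuous_at :: "'a topology \<Rightarrow> 'b topology \<Rightarrow> ('a \<Rightarrow> 'b) \<Rightarrow> 'a \<Rightarrow> bool" where
  "quasi_continuous_at X Y f x \<longleftrightarrow>
     (\<forall>U V. openin X U \<and> x \<in> U \<and> openin Y V \<and> f x \<in> V \<longrightarrow>
        (\<exists>G. openin X G \<and> G \<noteq> {} \<and> G \<subseteq> U \<and> f ` G \<subseteq> V))"

definition quasi_continuous :: "'a topology \<Rightarrow> 'b topology \<Rightarrow> ('a \<Rightarrow> 'b) \<Rightarrow> bool" where
  "quasi_continuous X Y f \<longleftrightarrow>
     f ` topspace X \<subseteq> topspace Y \<and> (\<forall>x \<in> topspace X. quasi_continuous_at X Y f x)"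

text \<open>Q_P(X,Y): quasi-continuous functions (as extensional functions on topspace X) with the
  topology of pointwise convergence, i.e. the subspace topology of the product topology.\<close>
definition QP :: "'a topology \<Rightarrow> 'b topology \<Rightarrow> ('a \<Rightarrow> 'b) topology" where
  "QP X Y = subtopology (product_topology (\<lambda>_. Y) (topspace X))
              {f \<in> extensional (topspace X). quasi_continuous X Y f}"

definition network :: "'a topology \<Rightarrow> 'a set set \<Rightarrow> bool" where
  "network Z \<N> \<longleftrightarrow> \<N> \<subseteq> Pow (topspace Z) \<and>
     (\<forall>z U. openin Z U \<and> z \<in> U \<longrightarrow> (\<exists>N \<in> \<N>. z \<in> N \<and> N \<subseteq> U))"

end

theory Submission
  imports Defs
begin

theorem mainTheorem7:
  fixes X :: "'a topology" and Y :: "'b topology"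
  assumes "regular_space X"
    and "\<exists>V. openin Y V \<and> V \<noteq> {} \<and> V \<noteq> topspace Y"
  shows "\<forall>\<N>. network (QP X Y) \<N> \<longrightarrow>
           (\<exists>\<M>. network X \<M> \<and> (\<M> \<lesssim> \<N> \<or> countable \<M>))"
proof (intro allI impI)
  fix NN assume net: "network (QP X Y) NN"
  obtain V where V: "openin Y V" "V \<noteq> {}" "V \<noteq> topspace Y" using assms(2) by blast
  obtain y0 where y0: "y0 \<in> V" using V by blast
  have "V \<subseteq> topspace Y" using V(1) openin_subset by blast
  then obtain y1 where y1: "y1 \<in> topspace Y" "y1 \<notin> V" using V(3) by blast
  have y0t: "y0 \<in> topspace Y" using y0 \<open>V \<subseteq> topspace Y\<close> by blast
  define F where "F = (\<lambda>N. {z \<in> topspace X. \<forall>g\<in>N. g z \<in> V})"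
  have "network X (F ` NN)"
    unfolding network_def
  proof (intro conjI allI impI)
    show "F ` NN \<subseteq> Pow (topspace X)" unfolding F_def by auto
  next
    fix x U assume xU: "openin X U \<and> x \<in> U"
    have xt: "x \<in> topspace X" using xU openin_subset by blast
    have "closedin X (topspace X - U)" using xU by blast
    then obtain W W' where WW: "openin X W" "openin X W'" "x \<in> W" "topspace X - U \<subseteq> W'" "disjnt W W'"
      using assms(1) xt xU unfolding regular_space_def by (metis Diff_iff)
    define C where "C = X closure_of W"
    have CU: "C \<subseteq> U"
    proof -
      have "closedin X (topspace X - W')" using WW(2) by blast
      moreover have "W \<subseteq> topspace X - W'" using WW(1,5) openin_subset by (auto simp: disjnt_def)
      ultimately have "C \<subseteq> topspace X - W'" unfolding C_def by (rule closure_of_minimal[rotated])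
      thus ?thesis using WW(4) by blast
    qed
    have Ccl: "closedin X C" unfolding C_def by simp
    have WC: "W \<subseteq> C" unfolding C_def by (rule closure_of_subset[OF openin_subset[OF WW(1)]])
    define f where "f = (\<lambda>z. if z \<in> topspace X then (if z \<in> C then y0 else y1) else undefined)"
    have qc: "quasi_continuous X Y f"
      unfolding quasi_continuous_def
    proof (intro conjI ballI)
      show "f ` topspace X \<subseteq> topspace Y" using y0t y1 by (auto simp: f_def)
    next
      fix z assume zt: "z \<in> topspace X"
      show "quasi_continuous_at X Y f z"
        unfolding quasi_continuous_at_def
      proof (intro allI impI)
        fix U' V' assume h: "openin X U' \<and> z \<in> U' \<and> openin Y V' \<and> f z \<in> V'"
        show "\<exists>G. openin X G \<and> G \<noteq> {} \<and> G \<subseteq> U' \<and> f ` G \<subseteq> V'"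
        proof (cases "z \<in> C")
          case True
          then obtain w where w: "w \<in> W" "w \<in> U'" using h unfolding C_def in_closure_of by blast
          have "f z = y0" using True zt by (simp add: f_def)
          moreover have "\<forall>u\<in>U' \<inter> W. f u = y0" using WC WW(1) openin_subset by (auto simp: f_def)
          ultimately show ?thesis using h w WW(1)
            by (intro exI[of _ "U' \<inter> W"]) auto
        next
          case False
          have "f z = y1" using False zt by (simp add: f_def)
          moreover have "\<forall>u\<in>U' - C. f u = y1" using h openin_subset by (auto simp: f_def)
          moreover have "openin X (U' - C)" using h Ccl by blast
          ultimately show ?thesis using h False
            by (intro exI[of _ "U' - C"]) auto
        qed
      qed
    qed
    have fext: "f \<in> extensional (topspace X)" by (simp add: f_def extensional_def)
    have ftop: "f \<in> topspace (QP X Y)"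
      unfolding QP_def using qc fext y0t y1 by (auto simp: f_def PiE_def Pi_def)
    define Opn where "Opn = {g \<in> topspace (QP X Y). g x \<in> V}"
    have "openin (QP X Y) Opn"
    proof -
      have "continuous_map (QP X Y) Y (\<lambda>g. g x)"
        unfolding QP_def
        by (rule continuous_map_from_subtopology) (rule continuous_map_product_projection[OF xt])
      thus ?thesis unfolding Opn_def using V(1) openin_continuous_map_preimage by blast
    qed
    moreover have "f \<in> Opn" unfolding Opn_def using ftop xt CU WC WW(3) y0 by (auto simp: f_def)
    ultimately obtain N where N: "N \<in> NN" "f \<in> N" "N \<subseteq> Opn" using net unfolding network_def by blast
    have "x \<in> F N" using N xt unfolding F_def Opn_def by auto
    moreover have "F N \<subseteq> U"
    proof
      fix z assume z: "z \<in> F N"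
      show "z \<in> U"
      proof (rule ccontr)
        assume "z \<notin> U"
        hence "f z = y1" using z CU by (auto simp: F_def f_def)
        thus False using z N(2) y1(2) by (auto simp: F_def)
      qed
    qed
    ultimately show "\<exists>M\<in>F ` NN. x \<in> M \<and> M \<subseteq> U" using N(1) by blast
  qed
  thus "\<exists>\<M>. network X \<M> \<and> (\<M> \<lesssim> NN \<or> countable \<M>)"
    using image_lepoll by blast
qed

end
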